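(* Assume $n\ge3$. Let $|\Psi^{\mathrm h}_0\rangle$ and $|\Psi^{\mathrm c}_0\rangle$ be initial states with $p^{\mathrm h}_0(0)>0$, $p^{\mathrm c}_0(0)>0$, $D_I^{\mathrm h}(0)>D_I^{\mathrm c}(0)$, and additionally $p^{\mathrm h}_i(0)=0$ for all $i>2$ and $p^{\mathrm c}_j(0)=0$ for all $j>1$. With $r^{\mathrm h},r^{\mathrm c},s^{\mathrm h}$ as defined in the context, and $\epsilon>0$, the Mpemba effect with respect to $D_I$ occurs before the threshold $\epsilon$ if and only if $r^{\mathrm h}<r^{\mathrm c}$ and $$\epsilon<\left(1+\frac{1}{r^{\mathrm c}}\left(\frac{s^{\mathrm h}-r^{\mathrm h}}{r^{\mathrm c}-r^{\mathrm h}}\right)^{\frac{E_1}{E_2-E_1}}\right)^{-1}.$$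
   Context: Let $H$ be a Hamiltonian on an $n$-dimensional Hilbert space with nondegenerate eigenvalues $0=E_0<E_1<\dots<E_{n-1}$ and orthonormal eigenvectors $|E_i\rangle$. QITE of a pure state $|\Psi_0\rangle$ is $|\Psi(\tau)\rangle=e^{-H\tau}|\Psi_0\rangle/\sqrt{\langle\Psi_0|e^{-2H\tau}|\Psi_0\rangle}$, with populations $p_i(\tau)=|\langle E_i|\Psi(\tau)\rangle|^2=p_i(0)e^{-2E_i\tau}/\sum_j p_j(0)e^{-2E_j\tau}$, and ground-state infidelity $D_I(\tau)=1-p_0(\tau)$. Superscripts $\mathrm h,\mathrm c$ refer to the trajectories from $|\Psi^{\mathrm h}_0\rangle$, $|\Psi^{\mathrm c}_0\rangle$. Define $r^{\mathrm h}=p^{\mathrm h}_1(0)/p^{\mathrm h}_0(0)$, $r^{\mathrm c}=p^{\mathrm c}_1(0)/p^{\mathrm c}_0(0)$, $s^{\mathrm h}=(1-p^{\mathrm h}_0(0))/p^{\mathrm h}_0(0)$. "The Mpemba effect occurs before the threshold $\epsilon$" means: there exists $\tau^\star>0$ with $D_I^{\mathrm h}(\tau^\star)=D_I^{\mathrm c}(\tau^\star)>\epsilon$ and $D_I^{\mathrm h}(\tau)<D_I^{\mathrm c}(\tau)$ for all $\tau>\tau^\star$. *)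

theory Defs
  imports Complex_Main
begin

text \<open>The Hamiltonian H on an n-dimensional Hilbert space is represented by its
  eigenvalues E 0, ..., E (n-1) (eigenvectors |E_i> form an orthonormal basis).
  A pure state is represented by its amplitudes c i = <E_i|Psi_0> in that basis.\<close>

definition is_state :: "nat \<Rightarrow> (nat \<Rightarrow> complex) \<Rightarrow> bool" where
  "is_state n c \<longleftrightarrow> (\<Sum>i<n. (cmod (c i))\<^sup>2) = 1"

definition pop :: "nat \<Rightarrow> (nat \<Rightarrow> real) \<Rightarrow> (nat \<Rightarrow> complex) \<Rightarrow> real \<Rightarrow> nat \<Rightarrow> real" where
  "pop n E c \<tau> i =
     (cmod (c i))\<^sup>2 * exp (-2 * E i * \<tau>) / (\<Sum>j<n. (cmod (c j))\<^sup>2 * exp (-2 * E j * \<tau>))"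

definition DI :: "nat \<Rightarrow> (nat \<Rightarrow> real) \<Rightarrow> (nat \<Rightarrow> complex) \<Rightarrow> real \<Rightarrow> real" where
  "DI n E c \<tau> = 1 - pop n E c \<tau> 0"

definition mpemba_before ::
  "nat \<Rightarrow> (nat \<Rightarrow> real) \<Rightarrow> (nat \<Rightarrow> complex) \<Rightarrow> (nat \<Rightarrow> complex) \<Rightarrow> real \<Rightarrow> bool" where
  "mpemba_before n E ch cc \<epsilon> \<longleftrightarrow>
     (\<exists>\<tau>s>0. DI n E ch \<tau>s = DI n E cc \<tau>s \<and> DI n E ch \<tau>s > \<epsilon> \<and>
             (\<forall>\<tau>>\<tau>s. DI n E ch \<tau> < DI n E cc \<tau>))"

end

theory Submission
  imports Defs
begin

lemma sum3:
  fixes g :: "nat \<Rightarrow> real"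
  assumes "n \<ge> 3" "\<And>i. 2 < i \<Longrightarrow> i < n \<Longrightarrow> g i = 0"
  shows "(\<Sum>j<n. g j) = g 0 + g 1 + g 2"
proof -
  have "(\<Sum>j<n. g j) = (\<Sum>j<3. g j)"
    by (rule sum.mono_neutral_right) (use assms in auto)
  also have "\<dots> = g 0 + g 1 + g 2" by (simp add: eval_nat_numeral)
  finally show ?thesis .
qed

theorem mainTheorem3:
  fixes n :: nat and E :: "nat \<Rightarrow> real" and ch cc :: "nat \<Rightarrow> complex" and \<epsilon> :: real
  assumes n3: "n \<ge> 3"
    and E0: "E 0 = 0"
    and Emono: "\<And>i j. i < j \<Longrightarrow> j < n \<Longrightarrow> E i < E j"
    and sh: "is_state n ch" and sc: "is_state n cc"
    and ph0: "pop n E ch 0 0 > 0" and pc0: "pop n E cc 0 0 > 0"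
    and hot: "DI n E ch 0 > DI n E cc 0"
    and hsupp: "\<And>i. 2 < i \<Longrightarrow> i < n \<Longrightarrow> pop n E ch 0 i = 0"
    and csupp: "\<And>j. 1 < j \<Longrightarrow> j < n \<Longrightarrow> pop n E cc 0 j = 0"
    and eps: "\<epsilon> > 0"
  shows "mpemba_before n E ch cc \<epsilon> \<longleftrightarrow>
    (let rh = pop n E ch 0 1 / pop n E ch 0 0;
         rc = pop n E cc 0 1 / pop n E cc 0 0;
         s = (1 - pop n E ch 0 0) / pop n E ch 0 0
     in rh < rc \<and>
        \<epsilon> < inverse (1 + (1 / rc) * ((s - rh) / (rc - rh)) powr (E 1 / (E 2 - E 1))))"
proof -
  define a where "a i = (cmod (ch i))\<^sup>2" for i
  define b where "b i = (cmod (cc i))\<^sup>2" for i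
  have a1s: "(\<Sum>i<n. a i) = 1" using sh by (simp add: is_state_def a_def)
  have b1s: "(\<Sum>i<n. b i) = 1" using sc by (simp add: is_state_def b_def)
  have popa: "pop n E ch 0 i = a i" for i using a1s by (simp add: pop_def a_def)
  have popb: "pop n E cc 0 i = b i" for i using b1s by (simp add: pop_def b_def)
  have anz: "a i = 0" if "2 < i" "i < n" for i using hsupp[OF that] popa by simp
  have bnz: "b i = 0" if "1 < i" "i < n" for i using csupp[OF that] popb by simp
  have age: "a i \<ge> 0" "b i \<ge> 0" for i by (auto simp: a_def b_def)
  have a0: "a 0 > 0" using ph0 popa by simp
  have b0: "b 0 > 0" using pc0 popb by simp
  have E1: "E 1 > 0" using Emono[of 0 1] n3 E0 by simp
  have E12: "E 2 > E 1" using Emono[of 1 2] n3 by simp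
  define x where "x \<tau> = exp (-2 * E 1 * \<tau>)" for \<tau>
  define y where "y \<tau> = exp (-2 * E 2 * \<tau>)" for \<tau>
  have Sh: "(\<Sum>j<n. (cmod (ch j))\<^sup>2 * exp (-2 * E j * \<tau>)) = a 0 + a 1 * x \<tau> + a 2 * y \<tau>" for \<tau>
    using sum3[OF n3, of "\<lambda>j. a j * exp (-2 * E j * \<tau>)"] anz
    by (simp add: a_def x_def y_def E0)
  have Sc: "(\<Sum>j<n. (cmod (cc j))\<^sup>2 * exp (-2 * E j * \<tau>)) = b 0 + b 1 * x \<tau>" for \<tau>
  proof -
    have "(\<Sum>j<n. b j * exp (-2 * E j * \<tau>)) = b 0 * exp (-2 * E 0 * \<tau>) + b 1 * exp (-2 * E 1 * \<tau>) + b 2 * exp (-2 * E 2 * \<tau>)"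
      by (rule sum3[OF n3]) (use bnz in auto)
    moreover have "b 2 = 0" using bnz[of 2] n3 by simp
    ultimately show ?thesis by (simp add: b_def x_def E0)
  qed
  have xpos: "x \<tau> > 0" "y \<tau> > 0" for \<tau> by (auto simp: x_def y_def)
  have DIh: "DI n E ch \<tau> = 1 - a 0 / (a 0 + a 1 * x \<tau> + a 2 * y \<tau>)" for \<tau>
    unfolding DI_def pop_def Sh by (simp add: a_def[symmetric] E0)
  have DIc: "DI n E cc \<tau> = 1 - b 0 / (b 0 + b 1 * x \<tau>)" for \<tau>
    unfolding DI_def pop_def Sc by (simp add: b_def[symmetric] E0)
  define K where "K = a 0 * b 1 - b 0 * a 1"
  define L where "L = b 0 * a 2"
  have Lge: "L \<ge> 0" using age b0 by (simp add: L_def)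
  have posh: "a 0 + a 1 * x \<tau> + a 2 * y \<tau> > 0" for \<tau>
    using a0 age[of 1] age[of 2] xpos[of \<tau>] by (simp add: add_pos_nonneg)
  have posc: "b 0 + b 1 * x \<tau> > 0" for \<tau>
    using b0 age[of 1] xpos[of \<tau>] by (simp add: add_pos_nonneg)
  have less: "DI n E ch \<tau> < DI n E cc \<tau> \<longleftrightarrow> L * y \<tau> < K * x \<tau>" for \<tau>
  proof -
    have "DI n E ch \<tau> < DI n E cc \<tau> \<longleftrightarrow> b 0 / (b 0 + b 1 * x \<tau>) < a 0 / (a 0 + a 1 * x \<tau> + a 2 * y \<tau>)"
      by (simp add: DIh DIc)
    also have "\<dots> \<longleftrightarrow> b 0 * (a 0 + a 1 * x \<tau> + a 2 * y \<tau>) < a 0 * (b 0 + b 1 * x \<tau>)"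
      using posh[of \<tau>] posc[of \<tau>] by (simp add: divide_simps)
    also have "\<dots> \<longleftrightarrow> L * y \<tau> < K * x \<tau>"
      by (simp add: K_def L_def algebra_simps)
    finally show ?thesis .
  qed
  have eq: "DI n E ch \<tau> = DI n E cc \<tau> \<longleftrightarrow> L * y \<tau> = K * x \<tau>" for \<tau>
  proof -
    have "DI n E ch \<tau> = DI n E cc \<tau> \<longleftrightarrow> b 0 / (b 0 + b 1 * x \<tau>) = a 0 / (a 0 + a 1 * x \<tau> + a 2 * y \<tau>)"
      by (auto simp add: DIh DIc)
    also have "\<dots> \<longleftrightarrow> b 0 * (a 0 + a 1 * x \<tau> + a 2 * y \<tau>) = a 0 * (b 0 + b 1 * x \<tau>)"
      using posh[of \<tau>] posc[of \<tau>] by (simp add: divide_simps)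
    also have "\<dots> \<longleftrightarrow> L * y \<tau> = K * x \<tau>"
      by (simp add: K_def L_def algebra_simps)
    finally show ?thesis .
  qed
  have hotLK: "L > K"
  proof -
    have "\<not> L * y 0 < K * x 0" "\<not> L * y 0 = K * x 0" using less[of 0] eq[of 0] hot by auto
    thus ?thesis by (simp add: x_def y_def)
  qed
  define \<alpha> where "\<alpha> = E 1 / (E 2 - E 1)"
  have yx: "y \<tau> = exp (-2 * (E 2 - E 1) * \<tau>) * x \<tau>" for \<tau>
    by (simp add: x_def y_def exp_add[symmetric] algebra_simps)
  have xpow: "x \<tau> = exp (-2 * (E 2 - E 1) * \<tau>) powr \<alpha>" for \<tau>
  proof -
    have "-2 * E 1 * \<tau> = \<alpha> * (-2 * (E 2 - E 1) * \<tau>)" using E12 by (simp add: \<alpha>_def field_simps)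
    thus ?thesis by (simp add: x_def powr_def)
  qed
  have rhrc: "(pop n E ch 0 1 / pop n E ch 0 0 < pop n E cc 0 1 / pop n E cc 0 0) \<longleftrightarrow> K > 0"
    using a0 b0 by (simp add: popa popb K_def divide_simps mult.commute)
  have Dc_form: "DI n E cc \<tau> = inverse (1 + (b 0 / b 1) * inverse (x \<tau>))" if "b 1 > 0" for \<tau>
    using that b0 xpos[of \<tau>] posc[of \<tau>] by (simp add: DIc field_simps)
  have form: "(1 - pop n E ch 0 0) / pop n E ch 0 0 - pop n E ch 0 1 / pop n E ch 0 0 = a 2 / a 0"
  proof -
    have "1 - a 0 = a 1 + a 2" using a1s sum3[OF n3, of a] anz by simp
    hence "1 - a 0 - a 1 = a 2" by simp
    moreover have "(1 - a 0) / a 0 - a 1 / a 0 = (1 - a 0 - a 1) / a 0" by (simp add: diff_divide_distrib)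
    ultimately show ?thesis by (simp add: popa)
  qed
  have rcrh: "pop n E cc 0 1 / pop n E cc 0 0 - pop n E ch 0 1 / pop n E ch 0 0 = K / (a 0 * b 0)"
    using a0 b0 by (simp add: popa popb K_def field_simps)
  have ratio: "(a 2 / a 0) / (K / (a 0 * b 0)) = L / K" if "K > 0"
    using a0 b0 that by (simp add: L_def field_simps)
  show ?thesis
  proof (cases "K > 0")
    case False
    have "\<not> mpemba_before n E ch cc \<epsilon>"
    proof
      assume "mpemba_before n E ch cc \<epsilon>"
      then obtain \<tau>s where "\<tau>s > 0" "\<forall>\<tau>>\<tau>s. DI n E ch \<tau> < DI n E cc \<tau>"
        unfolding mpemba_before_def by blast
      then have "L * y (\<tau>s + 1) < K * x (\<tau>s + 1)" using less by simp
      moreover have "K * x (\<tau>s + 1) \<le> 0" using False xpos[of "\<tau>s+1"]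
        by (simp add: mult_nonpos_nonneg)
      moreover have "L * y (\<tau>s + 1) \<ge> 0" using Lge xpos[of "\<tau>s+1"] by simp
      ultimately show False by simp
    qed
    thus ?thesis using False rhrc by (simp add: Let_def)
  next
    case True
    have Lpos: "L > 0" using True hotLK by simp
    have "b 0 * a 1 \<ge> 0" using b0 age[of 1] by simp
    hence "a 0 * b 1 > 0" using True unfolding K_def by linarith
    hence b1: "b 1 > 0" using a0 by (simp add: zero_less_mult_iff)
    have rc_eq: "pop n E cc 0 1 / pop n E cc 0 0 = b 1 / b 0" by (simp add: popb)
    have crossing: "L * y \<tau> = K * x \<tau> \<longleftrightarrow> exp (-2 * (E 2 - E 1) * \<tau>) = K / L" for \<tau>
      using xpos[of \<tau>] Lpos by (simp add: yx field_simps)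
    have Dval: "DI n E cc \<tau> = inverse (1 + (b 0 / b 1) * (L / K) powr \<alpha>)"
      if "exp (-2 * (E 2 - E 1) * \<tau>) = K / L" for \<tau>
    proof -
      have "x \<tau> = (K / L) powr \<alpha>" using that xpow by simp
      also have "\<dots> = K powr \<alpha> / L powr \<alpha>" using True Lpos by (simp add: powr_divide)
      finally have "inverse (x \<tau>) = L powr \<alpha> / K powr \<alpha>" by simp
      hence "inverse (x \<tau>) = (L / K) powr \<alpha>" using True Lpos by (simp add: powr_divide)
      thus ?thesis using Dc_form[OF b1] by simp
    qed
    have RHS: "(let rh = pop n E ch 0 1 / pop n E ch 0 0;
         rc = pop n E cc 0 1 / pop n E cc 0 0;
         s = (1 - pop n E ch 0 0) / pop n E ch 0 0
     in rh < rc \<and>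
        \<epsilon> < inverse (1 + (1 / rc) * ((s - rh) / (rc - rh)) powr (E 1 / (E 2 - E 1))))
      \<longleftrightarrow> \<epsilon> < inverse (1 + (b 0 / b 1) * (L / K) powr \<alpha>)"
      using True rhrc form rcrh ratio[OF True] rc_eq
      by (simp add: Let_def \<alpha>_def mult.commute)
    define \<tau>0 where "\<tau>0 = ln (L / K) / (2 * (E 2 - E 1))"
    have t0pos: "\<tau>0 > 0" using Lpos True hotLK E12 by (simp add: \<tau>0_def)
    have t0: "exp (-2 * (E 2 - E 1) * \<tau>0) = K / L"
    proof -
      have "-2 * (E 2 - E 1) * \<tau>0 = - ln (L / K)" using E12 by (simp add: \<tau>0_def field_simps)
      thus ?thesis using Lpos True by (simp add: exp_minus exp_diff)
    qed
    have uniq: "\<tau> = \<tau>0" if "exp (-2 * (E 2 - E 1) * \<tau>) = K / L" for \<tau>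
    proof -
      have "exp (-2 * (E 2 - E 1) * \<tau>) = exp (-2 * (E 2 - E 1) * \<tau>0)" using that t0 by simp
      hence "-2 * (E 2 - E 1) * \<tau> = -2 * (E 2 - E 1) * \<tau>0" by (simp only: exp_inj_iff)
      thus ?thesis using E12 by simp
    qed
    have after: "DI n E ch \<tau> < DI n E cc \<tau>" if "\<tau> > \<tau>0" for \<tau>
    proof -
      have "exp (-2 * (E 2 - E 1) * \<tau>) < exp (-2 * (E 2 - E 1) * \<tau>0)"
        using that E12 by simp
      hence "L * exp (-2 * (E 2 - E 1) * \<tau>) < L * (K / L)" using t0 Lpos
        by (simp only: mult_strict_left_mono)
      hence "L * exp (-2 * (E 2 - E 1) * \<tau>) < K" using Lpos by simp
      hence "L * y \<tau> < K * x \<tau>" using xpos[of \<tau>] by (simp add: yx)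
      thus ?thesis using less by simp
    qed
    have "mpemba_before n E ch cc \<epsilon> \<longleftrightarrow> \<epsilon> < inverse (1 + (b 0 / b 1) * (L / K) powr \<alpha>)"
    proof
      assume "mpemba_before n E ch cc \<epsilon>"
      then obtain \<tau>s where "DI n E ch \<tau>s = DI n E cc \<tau>s" "DI n E ch \<tau>s > \<epsilon>"
        unfolding mpemba_before_def by blast
      thus "\<epsilon> < inverse (1 + (b 0 / b 1) * (L / K) powr \<alpha>)"
        using eq crossing Dval by metis
    next
      assume "\<epsilon> < inverse (1 + (b 0 / b 1) * (L / K) powr \<alpha>)"
      moreover have "DI n E ch \<tau>0 = DI n E cc \<tau>0" using eq crossing t0 by simp
      ultimately show "mpemba_before n E ch cc \<epsilon>"
        unfolding mpemba_before_def using t0pos after Dval[OF t0] by auto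
    qed
    thus ?thesis using RHS by simp
  qed
qed

end
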